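(* Let $F'\in\mathcal I$ and suppose $\sum_{u\in F'}f(u)+\sum_{v\in P}w'(v)d(v,F')^p\le z'$. Then $\sum_{u\in F'}f(u)+\sum_{v\in P}w(v)d(v,F')^p\le 4\cdot16^{p-1}z^*+\left(\tfrac87\right)^{p-1}z'$, where $z^*$ is the optimal value of $\textsc{FacilityMatLP}(w,\mathcal M)$.
   Context: Setting: $p\ge1$; a finite metric $d$ on $P\cup\mathcal F$; $f:\mathcal F\to\mathbb{R}_{\ge0}$; $w:P\to\mathbb{R}_{\ge0}$; matroid $\mathcal M=(\mathcal F,\mathcal I)$ with rank $r$. $\textsc{FacilityMatLP}(w,\mathcal M)$: minimize $\sum_u f(u)y_u+\sum_{v,u}w(v)d(v,u)^px_{vu}$ s.t. $\sum_u x_{vu}\ge1$, $\sum_{u\in S}y_u\le r(S)$ for all $S\subseteq\mathcal F$, $0\le x_{vu}\le y_u$. Let $(x,y)$ be an optimal solution (value $z^*$) with $\sum_u x_{vu}=1$ for all $v$, and $\mathcal R(v):=(\sum_u d(v,u)^px_{vu})^{1/p}$. $w'$ is obtained by client consolidation: order clients so that $\mathcal R(v_1)\le\dots\le\mathcal R(v_n)$; set $w':=w$; for $i=1,\dots,n-1$ and $j=i+1,\dots,n$: if $d(v_i,v_j)\le2^{(p+1)/p}\mathcal R(v_j)$ and $w'(v_i)>0$, set $w'(v_i)\leftarrow w'(v_i)+w'(v_j)$, $w'(v_j)\leftarrow0$. *)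

theory Defs
  imports Complex_Main
begin

definition matroid :: "'a set \<Rightarrow> 'a set set \<Rightarrow> bool" where
  "matroid E I \<longleftrightarrow> finite E \<and> (\<forall>A\<in>I. A \<subseteq> E) \<and> {} \<in> I \<and>
     (\<forall>A B. B \<in> I \<longrightarrow> A \<subseteq> B \<longrightarrow> A \<in> I) \<and>
     (\<forall>A B. A \<in> I \<longrightarrow> B \<in> I \<longrightarrow> card A < card B \<longrightarrow> (\<exists>x\<in>B - A. insert x A \<in> I))"

definition mrank :: "'a set set \<Rightarrow> 'a set \<Rightarrow> nat" where
  "mrank I S = Max {card A | A. A \<in> I \<and> A \<subseteq> S}"

definition metric_on :: "'a set \<Rightarrow> ('a \<Rightarrow> 'a \<Rightarrow> real) \<Rightarrow> bool" where
  "metric_on X d \<longleftrightarrow> (\<forall>a\<in>X. \<forall>b\<in>X. 0 \<le> d a b \<and> (d a b = 0 \<longleftrightarrow> a = b) \<and> d a b = d b a) \<and>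
     (\<forall>a\<in>X. \<forall>b\<in>X. \<forall>c\<in>X. d a c \<le> d a b + d b c)"

definition dist_set :: "('a \<Rightarrow> 'a \<Rightarrow> real) \<Rightarrow> 'a \<Rightarrow> 'a set \<Rightarrow> real" where
  "dist_set d v S = Min ((\<lambda>u. d v u) ` S)"

definition lp_feasible ::
  "'a set \<Rightarrow> 'a set \<Rightarrow> 'a set set \<Rightarrow> ('a \<Rightarrow> 'a \<Rightarrow> real) \<Rightarrow> ('a \<Rightarrow> real) \<Rightarrow> bool" where
  "lp_feasible P F I x y \<longleftrightarrow>
     (\<forall>v\<in>P. (\<Sum>u\<in>F. x v u) \<ge> 1) \<and>
     (\<forall>S. S \<subseteq> F \<longrightarrow> (\<Sum>u\<in>S. y u) \<le> real (mrank I S)) \<and>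
     (\<forall>v\<in>P. \<forall>u\<in>F. 0 \<le> x v u \<and> x v u \<le> y u)"

definition lp_obj ::
  "real \<Rightarrow> ('a \<Rightarrow> 'a \<Rightarrow> real) \<Rightarrow> ('a \<Rightarrow> real) \<Rightarrow> ('a \<Rightarrow> real) \<Rightarrow> 'a set \<Rightarrow> 'a set
     \<Rightarrow> ('a \<Rightarrow> 'a \<Rightarrow> real) \<Rightarrow> ('a \<Rightarrow> real) \<Rightarrow> real" where
  "lp_obj p d f w P F x y =
     (\<Sum>u\<in>F. f u * y u) + (\<Sum>v\<in>P. \<Sum>u\<in>F. w v * d v u powr p * x v u)"

definition lp_optimal ::
  "real \<Rightarrow> ('a \<Rightarrow> 'a \<Rightarrow> real) \<Rightarrow> ('a \<Rightarrow> real) \<Rightarrow> ('a \<Rightarrow> real) \<Rightarrow> 'a set \<Rightarrow> 'a set \<Rightarrow> 'a set set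
     \<Rightarrow> ('a \<Rightarrow> 'a \<Rightarrow> real) \<Rightarrow> ('a \<Rightarrow> real) \<Rightarrow> bool" where
  "lp_optimal p d f w P F I x y \<longleftrightarrow> lp_feasible P F I x y \<and>
     (\<forall>x' y'. lp_feasible P F I x' y' \<longrightarrow> lp_obj p d f w P F x y \<le> lp_obj p d f w P F x' y')"

definition frac_radius ::
  "real \<Rightarrow> ('a \<Rightarrow> 'a \<Rightarrow> real) \<Rightarrow> 'a set \<Rightarrow> ('a \<Rightarrow> 'a \<Rightarrow> real) \<Rightarrow> 'a \<Rightarrow> real" where
  "frac_radius p d F x v = (\<Sum>u\<in>F. d v u powr p * x v u) powr (1 / p)"

fun consol_inner :: "('a \<Rightarrow> 'a \<Rightarrow> bool) \<Rightarrow> ('a \<Rightarrow> real) \<Rightarrow> 'a \<Rightarrow> 'a list \<Rightarrow> ('a \<Rightarrow> real)" where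
  "consol_inner C w' vi [] = w'"
| "consol_inner C w' vi (vj # js) =
     consol_inner C (if C vi vj \<and> w' vi > 0 then w'(vi := w' vi + w' vj, vj := 0) else w') vi js"

fun consol_outer :: "('a \<Rightarrow> 'a \<Rightarrow> bool) \<Rightarrow> ('a \<Rightarrow> real) \<Rightarrow> 'a list \<Rightarrow> ('a \<Rightarrow> real)" where
  "consol_outer C w' [] = w'"
| "consol_outer C w' (vi # rest) = consol_outer C (consol_inner C w' vi rest) rest"

definition consolidate ::
  "real \<Rightarrow> ('a \<Rightarrow> 'a \<Rightarrow> real) \<Rightarrow> 'a set \<Rightarrow> ('a \<Rightarrow> 'a \<Rightarrow> real) \<Rightarrow> ('a \<Rightarrow> real) \<Rightarrow> 'a list \<Rightarrow> ('a \<Rightarrow> real)" where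
  "consolidate p d F x w vs =
     consol_outer (\<lambda>vi vj. d vi vj \<le> 2 powr ((p + 1) / p) * frac_radius p d F x vj) w vs"

end

theory Submission
  imports Defs "HOL-Analysis.Analysis"
begin

lemma powr_split_ineq:
  fixes a b p :: real
  assumes a: "a \<ge> 0" and b: "b \<ge> 0" and p: "p \<ge> 1"
  shows "(a + b) powr p \<le> 8 powr (p - 1) * a powr p + (8/7) powr (p - 1) * b powr p"
proof (cases "a = 0 \<or> b = 0")
  case True
  have c1: "8 powr (p - 1) \<ge> (1::real)" using p by (simp add: ge_one_powr_ge_zero)
  have c2: "(8/7) powr (p - 1) \<ge> (1::real)" using p by (simp add: ge_one_powr_ge_zero)
  show ?thesis
  proof (cases "a = 0")
    case True
    have "b powr p \<le> (8/7) powr (p - 1) * b powr p"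
      using c2 by (simp add: mult_le_cancel_right1)
    then show ?thesis using True by simp
  next
    case False
    with \<open>a = 0 \<or> b = 0\<close> have "b = 0" by simp
    moreover have "a powr p \<le> 8 powr (p - 1) * a powr p"
      using c1 by (simp add: mult_le_cancel_right1)
    ultimately show ?thesis by simp
  qed
next
  case False
  then have a0: "a > 0" and b0: "b > 0" using a b by auto
  have conv: "convex_on {0<..} (\<lambda>x::real. x powr p)" by (rule powr_convex[OF p])
  have "((1 - 1/8) *\<^sub>R (8/7 * b) + (1/8) *\<^sub>R (8 * a)) powr p
        \<le> (1 - 1/8) * (8/7 * b) powr p + (1/8) * (8 * a) powr p"
    by (rule convex_onD[OF conv]) (use a0 b0 in auto)
  moreover have "(1 - 1/8) *\<^sub>R (8/7 * b) + (1/8) *\<^sub>R (8 * a) = a + b" by simp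
  moreover have "(1/8) * (8 * a) powr p = 8 powr (p - 1) * a powr p"
    using a0 by (simp add: powr_mult powr_diff)
  moreover have "(1 - 1/8) * (8/7 * b) powr p = (8/7) powr (p - 1) * b powr p"
  proof -
    have "(8/7 * b) powr p = (8/7) powr p * b powr p" using b0 powr_mult[of "8/7" b p] by simp
    moreover have "(8/7::real) powr p = (8/7) powr (p-1) * (8/7)" by (simp add: powr_diff)
    ultimately show ?thesis by simp
  qed
  ultimately show ?thesis by (simp add: add.commute)
qed

definition cinv :: "('a \<Rightarrow> 'a \<Rightarrow> bool) \<Rightarrow> ('a \<Rightarrow> real) \<Rightarrow> ('a \<Rightarrow> real) \<Rightarrow> ('a \<Rightarrow> 'a) \<Rightarrow> 'a set \<Rightarrow> 'a set \<Rightarrow> bool" where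
  "cinv C w w' \<sigma> P U \<longleftrightarrow> (\<forall>v\<in>P. \<sigma> v \<in> P \<and> (\<sigma> v = v \<or> C (\<sigma> v) v)) \<and>
     (\<forall>u\<in>P. w' u = (\<Sum>v\<in>{v\<in>P. \<sigma> v = u}. w v)) \<and> (\<forall>u\<in>U. \<forall>v\<in>P. \<sigma> v = u \<longrightarrow> v = u)"

lemma cinv_step:
  assumes fin: "finite P" and inv: "cinv C w w' \<sigma> P U" and vi: "vi \<in> P" "vi \<notin> U"
    and vj: "vj \<in> U" and UP: "U \<subseteq> P" and c: "C vi vj"
  shows "cinv C w (w'(vi := w' vi + w' vj, vj := 0)) (\<lambda>v. if \<sigma> v = vj then vi else \<sigma> v) P U"
proof -
  let ?s = "\<lambda>v. if \<sigma> v = vj then vi else \<sigma> v"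
  have ne: "vi \<noteq> vj" using vi vj by auto
  have vjP: "vj \<in> P" using vj UP by auto
  have vjfix: "\<forall>v\<in>P. \<sigma> v = vj \<longrightarrow> v = vj" using inv vj unfolding cinv_def by auto
  have A: "\<forall>v\<in>P. ?s v \<in> P \<and> (?s v = v \<or> C (?s v) v)"
    using inv vi vjfix c unfolding cinv_def by auto
  have B: "\<forall>u\<in>U. \<forall>v\<in>P. ?s v = u \<longrightarrow> v = u"
    using inv vi vj unfolding cinv_def by auto
  have empty: "{v\<in>P. ?s v = vj} = {}" using ne by auto
  have un: "{v\<in>P. ?s v = vi} = {v\<in>P. \<sigma> v = vi} \<union> {v\<in>P. \<sigma> v = vj}" using ne by auto
  have D: "\<forall>u\<in>P. (w'(vi := w' vi + w' vj, vj := 0)) u = (\<Sum>v\<in>{v\<in>P. ?s v = u}. w v)"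
  proof
    fix u assume u: "u \<in> P"
    show "(w'(vi := w' vi + w' vj, vj := 0)) u = (\<Sum>v\<in>{v\<in>P. ?s v = u}. w v)"
    proof (cases "u = vj")
      case True
      have e: "{v\<in>P. ?s v = u} = {}" using True empty by simp
      show ?thesis unfolding e using True by simp
    next
      case F1: False
      show ?thesis
      proof (cases "u = vi")
        case True
        have "(\<Sum>v\<in>{v\<in>P. ?s v = vi}. w v) = (\<Sum>v\<in>{v\<in>P. \<sigma> v = vi}. w v) + (\<Sum>v\<in>{v\<in>P. \<sigma> v = vj}. w v)"
          unfolding un by (rule sum.union_disjoint) (use fin ne in auto)
        then show ?thesis using True F1 inv vi vjP unfolding cinv_def by simp
      next
        case False
        have "{v\<in>P. ?s v = u} = {v\<in>P. \<sigma> v = u}" using False F1 by auto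
        then show ?thesis using False F1 inv u unfolding cinv_def by simp
      qed
    qed
  qed
  show ?thesis unfolding cinv_def by (intro conjI A B D)
qed

lemma cinv_inner:
  assumes "finite P" "vi \<in> P" "vi \<notin> U" "U \<subseteq> P"
  shows "set js \<subseteq> U \<Longrightarrow> cinv C w w' \<sigma> P U \<Longrightarrow> \<exists>\<sigma>'. cinv C w (consol_inner C w' vi js) \<sigma>' P U"
proof (induction js arbitrary: w' \<sigma>)
  case Nil then show ?case by auto
next
  case (Cons vj js)
  show ?case
  proof (cases "C vi vj \<and> w' vi > 0")
    case True
    have "cinv C w (w'(vi := w' vi + w' vj, vj := 0)) (\<lambda>v. if \<sigma> v = vj then vi else \<sigma> v) P U"
      using cinv_step[OF assms(1) Cons.prems(2) assms(2,3) _ assms(4)] True Cons.prems(1) by auto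
    then show ?thesis using Cons.IH Cons.prems(1) True by auto
  next
    case False
    then show ?thesis using Cons.IH Cons.prems by auto
  qed
qed

lemma cinv_outer:
  assumes "finite P"
  shows "distinct vs \<Longrightarrow> set vs \<subseteq> P \<Longrightarrow> cinv C w w' \<sigma> P (set vs) \<Longrightarrow> \<exists>\<sigma>'. cinv C w (consol_outer C w' vs) \<sigma>' P {}"
proof (induction vs arbitrary: w' \<sigma>)
  case Nil then show ?case by auto
next
  case (Cons vi rest)
  have "cinv C w w' \<sigma> P (set rest)" using Cons.prems(3) unfolding cinv_def by auto
  moreover have "vi \<in> P" "vi \<notin> set rest" "set rest \<subseteq> P" using Cons.prems by auto
  ultimately obtain \<sigma>' where "cinv C w (consol_inner C w' vi rest) \<sigma>' P (set rest)"
    using cinv_inner[OF assms] by blast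
  then show ?case using Cons.IH Cons.prems by auto
qed

lemma pow_const: "(p::real) \<ge> 1 \<Longrightarrow> 8 powr (p - 1) * 2 powr (p + 1) = 4 * 16 powr (p - 1)"
proof -
  have e8: "(8::real) powr (p-1) = 2 powr (3*(p-1))"
    using powr_powr[of 2 3 "p-1"] by simp
  have e16: "(16::real) powr (p-1) = 2 powr (4*(p-1))"
    using powr_powr[of 2 4 "p-1"] by simp
  have e4: "(4::real) = 2 powr 2" by simp
  have l: "(8::real) powr (p - 1) * 2 powr (p + 1) = 2 powr (3*(p-1) + (p+1))"
    unfolding e8 by (rule powr_add[symmetric])
  have r: "(4::real) * 16 powr (p - 1) = 2 powr (2 + 4*(p-1))"
    unfolding e16 by (subst e4) (rule powr_add[symmetric])
  have "3*(p-1) + (p+1) = 2 + 4*(p-1)" by simp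
  then show ?thesis using l r by simp
qed

theorem mainTheorem10:
  fixes p :: real and d :: "'a \<Rightarrow> 'a \<Rightarrow> real" and P F :: "'a set" and I :: "'a set set"
    and f w :: "'a \<Rightarrow> real" and x :: "'a \<Rightarrow> 'a \<Rightarrow> real" and y :: "'a \<Rightarrow> real"
    and vs :: "'a list" and F' :: "'a set" and z' :: real
  assumes hp: "p \<ge> 1"
    and hP: "finite P" and hF: "finite F"
    and hd: "metric_on (P \<union> F) d"
    and hf: "\<forall>u\<in>F. f u \<ge> 0"
    and hw: "\<forall>v\<in>P. w v \<ge> 0"
    and hM: "matroid F I"
    and hopt: "lp_optimal p d f w P F I x y"
    and hsum1: "\<forall>v\<in>P. (\<Sum>u\<in>F. x v u) = 1"
    and hvs: "distinct vs" "set vs = P" "sorted (map (frac_radius p d F x) vs)"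
    and hF': "F' \<in> I" "F' \<noteq> {}"
    and hz': "(\<Sum>u\<in>F'. f u) + (\<Sum>v\<in>P. consolidate p d F x w vs v * dist_set d v F' powr p) \<le> z'"
  shows "(\<Sum>u\<in>F'. f u) + (\<Sum>v\<in>P. w v * dist_set d v F' powr p)
           \<le> 4 * 16 powr (p - 1) * lp_obj p d f w P F x y + (8 / 7) powr (p - 1) * z'"
proof -
  define R where "R = frac_radius p d F x"
  define C where "C = (\<lambda>vi vj. d vi vj \<le> 2 powr ((p + 1) / p) * R vj)"
  define w' where "w' = consolidate p d F x w vs"
  define D where "D = (\<lambda>v. dist_set d v F')"
  define S where "S = (\<lambda>v. \<Sum>u\<in>F. d v u powr p * x v u)"
  define c where "c = (8/7::real) powr (p - 1)"
  define K where "K = 4 * 16 powr (p - 1::real)"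
  have p0: "p > 0" using hp by simp
  have c1: "c \<ge> 1" unfolding c_def using hp by (simp add: ge_one_powr_ge_zero)
  have K0: "K \<ge> 0" unfolding K_def by simp
  have w'_eq: "w' = consol_outer C w vs" unfolding w'_def consolidate_def C_def R_def by simp
  have sing: "\<And>u. u \<in> P \<Longrightarrow> {v\<in>P. id v = u} = {u}" by auto
  have init: "cinv C w w id P (set vs)" unfolding cinv_def using hvs(2) sing by auto
  have ex: "\<exists>\<sigma>. cinv C w (consol_outer C w vs) \<sigma> P {}"
    by (rule cinv_outer[OF hP hvs(1)]) (use hvs(2) init in auto)
  then obtain \<sigma> where sig: "cinv C w w' \<sigma> P {}"
    using w'_eq by auto
  have sigP: "\<And>v. v \<in> P \<Longrightarrow> \<sigma> v \<in> P \<and> (\<sigma> v = v \<or> C (\<sigma> v) v)"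
    and w'sum: "\<And>u. u \<in> P \<Longrightarrow> w' u = (\<Sum>v\<in>{v\<in>P. \<sigma> v = u}. w v)"
    using sig unfolding cinv_def by auto
  have F'F: "F' \<subseteq> F" using hM hF'(1) unfolding matroid_def by auto
  have finF': "finite F'" using F'F hF finite_subset by auto
  have dnn: "\<And>a b. a \<in> P \<union> F \<Longrightarrow> b \<in> P \<union> F \<Longrightarrow> d a b \<ge> 0"
    and dsym: "\<And>a b. a \<in> P \<union> F \<Longrightarrow> b \<in> P \<union> F \<Longrightarrow> d a b = d b a"
    and dtri: "\<And>a b e. a \<in> P \<union> F \<Longrightarrow> b \<in> P \<union> F \<Longrightarrow> e \<in> P \<union> F \<Longrightarrow> d a e \<le> d a b + d b e"
  proof -
    have m1: "\<forall>a\<in>P \<union> F. \<forall>b\<in>P \<union> F. 0 \<le> d a b \<and> (d a b = 0 \<longleftrightarrow> a = b) \<and> d a b = d b a"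
      using hd unfolding metric_on_def by (rule conjunct1)
    have m2: "\<forall>a\<in>P \<union> F. \<forall>b\<in>P \<union> F. \<forall>c\<in>P \<union> F. d a c \<le> d a b + d b c"
      using hd unfolding metric_on_def by (rule conjunct2)
    show "\<And>a b. a \<in> P \<union> F \<Longrightarrow> b \<in> P \<union> F \<Longrightarrow> d a b \<ge> 0" using m1 by simp
    show "\<And>a b. a \<in> P \<union> F \<Longrightarrow> b \<in> P \<union> F \<Longrightarrow> d a b = d b a" using m1 by simp
    show "\<And>a b e. a \<in> P \<union> F \<Longrightarrow> b \<in> P \<union> F \<Longrightarrow> e \<in> P \<union> F \<Longrightarrow> d a e \<le> d a b + d b e"
      using m2 by simp
  qed
  have Dnn: "\<And>v. v \<in> P \<Longrightarrow> D v \<ge> 0"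
  proof -
    fix v assume v: "v \<in> P"
    have "D v \<in> (\<lambda>u. d v u) ` F'" unfolding D_def dist_set_def
      using finF' hF'(2) by (intro Min_in) auto
    then show "D v \<ge> 0" using dnn v F'F by auto
  qed
  have Dtri: "\<And>v v'. v \<in> P \<Longrightarrow> v' \<in> P \<Longrightarrow> D v \<le> d v v' + D v'"
  proof -
    fix v v' assume v: "v \<in> P" and v': "v' \<in> P"
    have "D v' \<in> (\<lambda>u. d v' u) ` F'" unfolding D_def dist_set_def
      using finF' hF'(2) by (intro Min_in) auto
    then obtain u where u: "u \<in> F'" "D v' = d v' u" by auto
    have "D v \<le> d v u" unfolding D_def dist_set_def using finF' u(1) by (intro Min_le) auto
    also have "\<dots> \<le> d v v' + d v' u" using dtri[of v v' u] v v' u F'F by auto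
    finally show "D v \<le> d v v' + D v'" using u by simp
  qed
  have xnn: "\<And>v u. v \<in> P \<Longrightarrow> u \<in> F \<Longrightarrow> 0 \<le> x v u"
    using hopt unfolding lp_optimal_def lp_feasible_def by auto
  have Snn: "\<And>v. v \<in> P \<Longrightarrow> S v \<ge> 0"
    unfolding S_def using xnn dnn by (auto intro!: sum_nonneg mult_nonneg_nonneg)
  have RS: "\<And>v. v \<in> P \<Longrightarrow> R v powr p = S v"
  proof -
    fix v assume v: "v \<in> P"
    have "R v = S v powr (1/p)" unfolding R_def frac_radius_def S_def by simp
    then have "R v powr p = S v powr (1/p * p)" by (simp add: powr_powr)
    then show "R v powr p = S v" using p0 Snn[OF v] by simp
  qed
  have key: "\<And>v. v \<in> P \<Longrightarrow> D v powr p \<le> c * D (\<sigma> v) powr p + K * S v"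
  proof -
    fix v assume v: "v \<in> P"
    have sv: "\<sigma> v \<in> P" using sigP[OF v] by simp
    show "D v powr p \<le> c * D (\<sigma> v) powr p + K * S v"
    proof (cases "\<sigma> v = v")
      case True
      have "D v powr p \<le> c * D v powr p" using c1 by (simp add: mult_le_cancel_right1)
      moreover have "0 \<le> K * S v" using K0 Snn[OF v] by simp
      ultimately show ?thesis using True by simp
    next
      case False
      then have Cv: "C (\<sigma> v) v" using sigP[OF v] by simp
      define a where "a = d v (\<sigma> v)"
      have a0: "a \<ge> 0" unfolding a_def using dnn v sv by auto
      have aR: "a \<le> 2 powr ((p + 1) / p) * R v"
        using Cv dsym[of v "\<sigma> v"] v sv unfolding C_def a_def by auto
      have h1: "D v powr p \<le> (a + D (\<sigma> v)) powr p"
        using Dtri[OF v sv] Dnn[OF v] p0 unfolding a_def by (intro powr_mono2) auto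
      have h2: "(a + D (\<sigma> v)) powr p \<le> 8 powr (p - 1) * a powr p + c * D (\<sigma> v) powr p"
        unfolding c_def by (rule powr_split_ineq[OF a0 Dnn[OF sv] hp])
      have h3a: "a powr p \<le> (2 powr ((p + 1) / p) * R v) powr p"
        using aR a0 p0 by (intro powr_mono2) auto
      have Rnn: "R v \<ge> 0" unfolding R_def frac_radius_def by simp
      have h3b: "(2 powr ((p + 1) / p) * R v) powr p = (2 powr ((p + 1) / p)) powr p * R v powr p"
        using Rnn by (simp add: powr_mult)
      have h3c: "(2 powr ((p + 1) / p)) powr p = (2::real) powr (p + 1)"
        using p0 by (simp add: powr_powr)
      have h3: "a powr p \<le> 2 powr (p + 1) * S v"
        using h3a h3b h3c RS[OF v] by simp
      have h4: "8 powr (p - 1) * a powr p \<le> 8 powr (p - 1) * (2 powr (p + 1) * S v)"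
        using h3 by (intro mult_left_mono) auto
      have h5: "8 powr (p - 1) * (2 powr (p + 1) * S v) = K * S v"
        unfolding K_def using pow_const[OF hp] by (simp only: mult.assoc[symmetric])
      show ?thesis using h1 h2 h4 h5 by linarith
    qed
  qed
  have sum1: "(\<Sum>v\<in>P. w v * D v powr p) \<le> (\<Sum>v\<in>P. c * (w v * D (\<sigma> v) powr p) + K * (w v * S v))"
  proof (rule sum_mono)
    fix v assume v: "v \<in> P"
    have "w v * D v powr p \<le> w v * (c * D (\<sigma> v) powr p + K * S v)"
      using key[OF v] hw v by (intro mult_left_mono) auto
    then show "w v * D v powr p \<le> c * (w v * D (\<sigma> v) powr p) + K * (w v * S v)"
      by (simp add: algebra_simps)
  qed
  have group: "(\<Sum>v\<in>P. w v * D (\<sigma> v) powr p) = (\<Sum>u\<in>P. w' u * D u powr p)"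
  proof -
    have "(\<Sum>v\<in>P. w v * D (\<sigma> v) powr p) = (\<Sum>u\<in>P. \<Sum>v\<in>{v\<in>P. \<sigma> v = u}. w v * D (\<sigma> v) powr p)"
      by (rule sum.group[symmetric]) (use hP sigP in auto)
    also have "\<dots> = (\<Sum>u\<in>P. \<Sum>v\<in>{v\<in>P. \<sigma> v = u}. w v * D u powr p)"
      by (intro sum.cong refl) auto
    also have "\<dots> = (\<Sum>u\<in>P. w' u * D u powr p)"
      by (intro sum.cong refl) (simp add: w'sum sum_distrib_right)
    finally show ?thesis .
  qed
  have conn: "(\<Sum>v\<in>P. w v * S v) = (\<Sum>v\<in>P. \<Sum>u\<in>F. w v * d v u powr p * x v u)"
    unfolding S_def by (simp add: sum_distrib_left mult.assoc)
  have fac: "(\<Sum>u\<in>F. f u * y u) \<ge> 0"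
  proof (cases "P = {}")
    case False
    then obtain v0 where v0: "v0 \<in> P" by auto
    have "\<forall>u\<in>F. y u \<ge> 0" using hopt v0 unfolding lp_optimal_def lp_feasible_def
      by (meson order_trans)
    then show ?thesis using hf by (auto intro!: sum_nonneg)
  next
    case True
    have "\<forall>u\<in>F. f u = 0"
    proof
      fix u0 assume u0: "u0 \<in> F"
      define y' where "y' = y(u0 := y u0 - 1)"
      have feas: "lp_feasible P F I x y'"
      proof -
        have "\<forall>S'. S' \<subseteq> F \<longrightarrow> (\<Sum>u\<in>S'. y' u) \<le> real (mrank I S')"
        proof (intro allI impI)
          fix S' assume S': "S' \<subseteq> F"
          have "(\<Sum>u\<in>S'. y' u) \<le> (\<Sum>u\<in>S'. y u)"
            unfolding y'_def by (intro sum_mono) auto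
          then show "(\<Sum>u\<in>S'. y' u) \<le> real (mrank I S')"
            using hopt S' unfolding lp_optimal_def lp_feasible_def by (meson order_trans)
        qed
        then show ?thesis using True unfolding lp_feasible_def by auto
      qed
      then have le: "lp_obj p d f w P F x y \<le> lp_obj p d f w P F x y'"
        using hopt unfolding lp_optimal_def by auto
      have "(\<Sum>u\<in>F. f u * y' u) = (\<Sum>u\<in>F. f u * y u) - f u0"
      proof -
        have "(\<Sum>u\<in>F. f u * y' u) = (\<Sum>u\<in>F. f u * y u - (if u = u0 then f u0 else 0))"
          unfolding y'_def by (intro sum.cong refl) (auto simp: algebra_simps)
        also have "\<dots> = (\<Sum>u\<in>F. f u * y u) - f u0"
          using hF u0 by (simp add: sum_subtractf)
        finally show ?thesis .
      qed
      then have "f u0 \<le> 0" using le True unfolding lp_obj_def by simp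
      then show "f u0 = 0" using hf u0 by force
    qed
    then show ?thesis by simp
  qed
  have objge: "(\<Sum>v\<in>P. w v * S v) \<le> lp_obj p d f w P F x y"
    unfolding lp_obj_def conn using fac by simp
  have f'nn: "(\<Sum>u\<in>F'. f u) \<ge> 0" using hf F'F by (auto intro!: sum_nonneg)
  have hz2: "(\<Sum>u\<in>F'. f u) + (\<Sum>u\<in>P. w' u * D u powr p) \<le> z'"
    using hz' unfolding w'_def D_def .
  have "(\<Sum>v\<in>P. w v * D v powr p) \<le> c * (\<Sum>u\<in>P. w' u * D u powr p) + K * (\<Sum>v\<in>P. w v * S v)"
  proof -
    have "(\<Sum>v\<in>P. c * (w v * D (\<sigma> v) powr p) + K * (w v * S v))
          = c * (\<Sum>v\<in>P. w v * D (\<sigma> v) powr p) + K * (\<Sum>v\<in>P. w v * S v)"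
      by (simp add: sum.distrib sum_distrib_left)
    then show ?thesis using sum1 group by simp
  qed
  moreover have "c * ((\<Sum>u\<in>F'. f u) + (\<Sum>u\<in>P. w' u * D u powr p)) \<le> c * z'"
    using hz2 c1 by (intro mult_left_mono) auto
  then have "c * (\<Sum>u\<in>F'. f u) + c * (\<Sum>u\<in>P. w' u * D u powr p) \<le> c * z'"
    by (simp only: distrib_left)
  moreover have "K * (\<Sum>v\<in>P. w v * S v) \<le> K * lp_obj p d f w P F x y"
    using objge K0 by (intro mult_left_mono) auto
  moreover have "(\<Sum>u\<in>F'. f u) \<le> c * (\<Sum>u\<in>F'. f u)" using c1 f'nn
    by (simp add: mult_le_cancel_right1 mult.commute)
  ultimately have "(\<Sum>u\<in>F'. f u) + (\<Sum>v\<in>P. w v * D v powr p) \<le> K * lp_obj p d f w P F x y + c * z'"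
    by linarith
  then show ?thesis unfolding K_def c_def D_def .
qed

end
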